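(* An irregular LDPC code satisfies the stability condition under binary message-passing decoding (using quantized or unquantized channel messages) if and only if the variable node degree distribution satisfies \[ \left(\lambda_{2} + 2\epsilon_{ch}\lambda_{3}\right)\left(d_{c}-1\right) < 1, \] where $\epsilon_{ch}$ denotes the error probability of a hard decision of the channel messages.
   Context: Consider check-regular LDPC codes in which every check node has degree $d_c$, and let $\lambda_i$ denote the fraction of edges connected to variable nodes of degree $i$ (edge-perspective variable node degree distribution). Transmission is over a binary-input symmetric-output channel (e.g. a binary-input AWGN channel); the channel output, converted to an L-value $L_{ch}$, is either used unquantized, hard-decided, or quantized into sign plus magnitude index $w=0,\ldots,W$ (equivalently, decomposed into binary symmetric sub-channels $w$ used with probability $p_w$ and having crossover probability $\epsilon_{ch,w}$, so that $\epsilon_{ch}=\sum_w p_w\epsilon_{ch,w}$). In the binary message-passing decoder, variable and check nodes exchange only binary messages in $\{+1,-1\}$: a check node outputs on each edge the product of its other $d_c-1$ incoming messages; a variable node of degree $d_v$ converts each incoming binary message from a binary symmetric channel with crossover probability $\epsilon$ to the L-value $y\log\frac{1-\epsilon}{\epsilon}$ (assuming it knows the crossover probabilities of the channel and of the check-to-variable messages), computes $L_{ev,j}=L_{ch}+\sum_{i\neq j}L_{av,i}$ for each edge $j$, and sends the sign of $L_{ev,j}$. The stability condition means that the decoder's message error probability decreases to zero when started from a sufficiently small error probability, i.e. the derivative of the one-iteration error-probability update at zero is less than one. *)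

theory Defs
  imports "HOL-Probability.Probability"
begin

text \<open>Error indicator for the sign decision at a variable node (transmitted bit +1):
  a negative extrinsic L-value is an error, a zero L-value (tie) is resolved by a fair
  coin, i.e. counts as an error with probability 1/2.\<close>
definition sign_err :: "real \<Rightarrow> real" where
  "sign_err x = (if x < 0 then 1 else if x = 0 then 1/2 else 0)"

definition bsc_L :: "real \<Rightarrow> real" where
  "bsc_L e = ln ((1 - e) / e)"

text \<open>Check node: error probability of the outgoing message when each of the other
  dc-1 incoming messages is wrong independently with probability x.\<close>
definition cn_err :: "nat \<Rightarrow> real \<Rightarrow> real" where
  "cn_err dc x = (1 - (1 - 2 * x) ^ (dc - 1)) / 2"

text \<open>Variable node of degree dv attached to channel sub-channel with crossover e,
  incoming check-to-variable messages wrong with probability p: error probability of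
  the outgoing binary message (sign of L_ch + sum of the other dv-1 L-values).\<close>
definition vn_err :: "nat \<Rightarrow> real \<Rightarrow> real \<Rightarrow> real" where
  "vn_err dv e p =
     (\<Sum>k\<le>dv - 1. real ((dv - 1) choose k) * p ^ k * (1 - p) ^ (dv - 1 - k) *
        ((1 - e) * sign_err (bsc_L e + (real (dv - 1) - 2 * real k) * bsc_L p)
         + e * sign_err (- bsc_L e + (real (dv - 1) - 2 * real k) * bsc_L p)))"

text \<open>One iteration of density evolution for the binary message passing decoder:
  maps the variable-to-check message error probability x to the new one.  The channel
  is given as a distribution M of the sub-channel crossover probabilities
  (finite for quantized / hard-decided channels, continuous for unquantized ones);
  lam i is the fraction of edges at variable nodes of degree i (degrees 2..dmax).\<close>
definition bmp_update ::
  "real measure \<Rightarrow> (nat \<Rightarrow> real) \<Rightarrow> nat \<Rightarrow> nat \<Rightarrow> real \<Rightarrow> real" where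
  "bmp_update M lam dmax dc x =
     (if x = 0 then 0
      else (\<Sum>i\<in>{2..dmax}. lam i * (\<integral>e. vn_err i e (cn_err dc x) \<partial>M)))"

definition bmp_stable :: "real measure \<Rightarrow> (nat \<Rightarrow> real) \<Rightarrow> nat \<Rightarrow> nat \<Rightarrow> bool" where
  "bmp_stable M lam dmax dc \<longleftrightarrow>
     (\<exists>D. (bmp_update M lam dmax dc has_real_derivative D) (at_right 0) \<and> D < 1)"

end

theory Submission
  imports Defs
begin

lemma se_bounds: "0 \<le> sign_err x" "sign_err x \<le> 1"
  by (auto simp: sign_err_def)

lemma se_pos: "x > 0 \<Longrightarrow> sign_err x = 0" and se_neg: "x < 0 \<Longrightarrow> sign_err x = 1"
  by (auto simp: sign_err_def)

lemma bsc_pos: "0 < p \<Longrightarrow> p < 1/2 \<Longrightarrow> bsc_L p > 0"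
  unfolding bsc_L_def by (intro ln_gt_zero) (simp add: field_simps)

lemma bsc_nonneg: "0 < p \<Longrightarrow> p \<le> 1/2 \<Longrightarrow> bsc_L p \<ge> 0"
  unfolding bsc_L_def by (intro ln_ge_zero) (simp add: field_simps)

lemma bsc_half: "bsc_L (1/2) = 0"
  unfolding bsc_L_def by simp

lemma bsc_mono: "0 < p \<Longrightarrow> p < e \<Longrightarrow> e < 1 \<Longrightarrow> bsc_L e < bsc_L p"
  unfolding bsc_L_def
proof -
  assume a: "0 < p" "p < e" "e < 1"
  have "(1 - e) / e < (1 - p) / p"
  proof -
    have "1/e < 1/p" using a by (simp add: frac_less2)
    moreover have "(1-e)/e = 1/e - 1" "(1-p)/p = 1/p - 1" using a by (auto simp: field_simps)
    ultimately show ?thesis by simp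
  qed
  moreover have "0 < (1 - e)/e" using a by simp
  ultimately show "ln ((1 - e) / e) < ln ((1 - p) / p)" by simp
qed

lemma bsc_lim: "filterlim bsc_L at_top (at_right 0)"
proof -
  have "((\<lambda>p. ln (1 - p)) \<longlongrightarrow> ln (1 - 0)) (at_right (0::real))"
    by (intro tendsto_intros) auto
  then have l1: "((\<lambda>p. ln (1 - p)) \<longlongrightarrow> 0) (at_right (0::real))" by simp
  have l2: "filterlim (\<lambda>p. - ln p) at_top (at_right (0::real))"
    by (rule filterlim_compose[OF filterlim_uminus_at_top_at_bot ln_at_0])
  have l3: "filterlim (\<lambda>p. ln (1 - p) + - ln p) at_top (at_right (0::real))"
    by (rule filterlim_tendsto_add_at_top[OF l1 l2])
  have ev: "eventually (\<lambda>p. ln (1 - p) + - ln p = bsc_L p) (at_right (0::real))"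
  proof -
    have "eventually (\<lambda>p. p \<in> {0<..<1}) (at_right (0::real))"
      by (rule eventually_at_right_real) simp
    then show ?thesis
    proof eventually_elim
      case (elim p)
      then have "0 < p" "0 < 1 - p" by auto
      then show ?case unfolding bsc_L_def by (subst ln_div) auto
    qed
  qed
  show ?thesis using filterlim_cong[OF refl refl ev] l3 by simp
qed



lemma B_bounds:
  assumes "0 \<le> e" "e \<le> 1"
  shows "0 \<le> (1-e) * sign_err a + e * sign_err b" "(1-e) * sign_err a + e * sign_err b \<le> 1"
proof -
  have a: "0 \<le> sign_err a" "sign_err a \<le> 1" "0 \<le> sign_err b" "sign_err b \<le> 1" using se_bounds by auto
  have "(1-e) * sign_err a \<le> (1-e) * 1" using a assms by (intro mult_left_mono) auto
  moreover have "e * sign_err b \<le> e * 1" using a assms by (intro mult_left_mono) auto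
  moreover have "0 \<le> (1-e) * sign_err a" "0 \<le> e * sign_err b" using a assms by auto
  ultimately show "0 \<le> (1-e) * sign_err a + e * sign_err b" "(1-e) * sign_err a + e * sign_err b \<le> 1"
    by auto
qed

lemma vn_bound:
  assumes dv: "dv \<ge> 2" and p: "0 < p" "p < 1/2" and e: "0 < e" "e \<le> 1/2"
  shows "0 \<le> vn_err dv e p" "vn_err dv e p \<le> 2^(dv-1) * p"
proof -
  define n where "n = dv - 1"
  have n1: "n \<ge> 1" using dv by (simp add: n_def)
  define B where "B k = (1-e) * sign_err(bsc_L e + (real n - 2*real k)*bsc_L p)
      + e * sign_err(-bsc_L e + (real n - 2*real k)*bsc_L p)" for k :: nat
  have vn: "vn_err dv e p = (\<Sum>k\<le>n. real (n choose k) * p^k * (1-p)^(n-k) * B k)"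
    by (simp add: vn_err_def n_def B_def)
  have B01: "0 \<le> B k" "B k \<le> 1" for k
    unfolding B_def using B_bounds e by auto
  have Lp: "bsc_L p > 0" using bsc_pos p by auto
  have Le: "bsc_L e \<ge> 0" using bsc_nonneg e by auto
  have trm: "real (n choose k) * p^k * (1-p)^(n-k) * B k \<le> real (n choose k) * p" if k: "k \<le> n" for k
  proof (cases "k = 0")
    case True
    have s1: "sign_err(bsc_L e + (real n - 2*real k)*bsc_L p) = 0"
    proof (rule se_pos)
      have "real n * bsc_L p > 0" using n1 Lp by simp
      then show "bsc_L e + (real n - 2*real k)*bsc_L p > 0" using True Le by simp
    qed
    have B0: "B k \<le> p"
    proof (cases "bsc_L p > bsc_L e")
      case True
      have "real n * bsc_L p \<ge> 1 * bsc_L p" using n1 Lp by (intro mult_right_mono) auto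
      then have "sign_err(-bsc_L e + (real n - 2*real k)*bsc_L p) = 0"
        using True \<open>k = 0\<close> by (intro se_pos) simp
      then show ?thesis using s1 p by (simp add: B_def)
    next
      case False
      have "e \<le> p"
      proof (rule ccontr)
        assume "\<not> e \<le> p"
        then have "bsc_L e < bsc_L p" using bsc_mono[of p e] p e by auto
        then show False using False by simp
      qed
      have "e * sign_err(-bsc_L e + (real n - 2*real k)*bsc_L p) \<le> e * 1"
        using se_bounds e by (intro mult_left_mono) auto
      then show ?thesis using s1 \<open>e \<le> p\<close> by (simp add: B_def)
    qed
    have "(1-p)^(n-k) \<le> 1" using p by (intro power_le_one) auto
    moreover have "0 \<le> (1-p)^(n-k)" using p by simp
    ultimately have "(1-p)^(n-k) * B k \<le> 1 * p"
      using B0 B01[of k] by (intro mult_mono) auto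
    then show ?thesis using True by simp
  next
    case False
    have "p^k \<le> p" using False p using power_decreasing[of 1 k p] by auto
    have "(1-p)^(n-k) \<le> 1" using p by (intro power_le_one) auto
    have "p^k * ((1-p)^(n-k) * B k) \<le> p * (1 * 1)"
      using \<open>p^k \<le> p\<close> \<open>(1-p)^(n-k) \<le> 1\<close> B01[of k] p
      by (intro mult_mono) auto
    then have "real (n choose k) * (p^k * ((1-p)^(n-k) * B k)) \<le> real (n choose k) * p"
      by (intro mult_left_mono) auto
    then show ?thesis by (simp add: mult.assoc)
  qed
  have "vn_err dv e p \<le> (\<Sum>k\<le>n. real (n choose k) * p)"
    unfolding vn by (intro sum_mono trm) auto
  also have "\<dots> = real (\<Sum>k\<le>n. n choose k) * p"
    by (simp add: sum_distrib_right)
  also have "\<dots> = 2^(dv-1) * p" by (simp add: choose_row_sum n_def)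
  finally show "vn_err dv e p \<le> 2^(dv-1) * p" .
  show "0 \<le> vn_err dv e p"
    unfolding vn using B01 p by (intro sum_nonneg mult_nonneg_nonneg) auto
qed


lemma vn_lim:
  assumes dv: "dv \<ge> 2" and e: "0 < e" "e \<le> 1/2"
  shows "((\<lambda>p. vn_err dv e p / p) \<longlongrightarrow>
           real (dv-1) * (if dv = 2 then 1 else if dv = 3 then e else 0)) (at_right 0)"
proof -
  define n where "n = dv - 1"
  have n1: "n \<ge> 1" using dv by (simp add: n_def)
  define c where "c = (if dv = 2 then 1 else if dv = 3 then e else 0)"
  define B where "B p k = (1-e) * sign_err(bsc_L e + (real n - 2*real k)*bsc_L p)
      + e * sign_err(-bsc_L e + (real n - 2*real k)*bsc_L p)" for p :: real and k :: nat
  define T where "T p k = real (n choose k) * p^k * (1-p)^(n-k) * B p k" for p :: real and k :: nat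
  define R where "R p = (\<Sum>k\<in>{2..n}. T p k)" for p
  have vn: "vn_err dv e p = (\<Sum>k\<le>n. T p k)" for p
    by (simp add: vn_err_def n_def B_def T_def)
  have split: "{..n} = {0,1} \<union> {2..n}" using n1 by auto
  have vn2: "vn_err dv e p = T p 0 + T p 1 + R p" for p
  proof -
    have "vn_err dv e p = (\<Sum>k\<in>{0,1}. T p k) + R p"
      unfolding vn split R_def by (subst sum.union_disjoint) auto
    then show ?thesis by simp
  qed
  have B01: "0 \<le> B p k" "B p k \<le> 1" for p k
    unfolding B_def using B_bounds e by auto
  have Le: "bsc_L e \<ge> 0" using bsc_nonneg e by auto
  have ev1: "eventually (\<lambda>p. p \<in> {0<..<1/2}) (at_right (0::real))"
    by (rule eventually_at_right_real) simp
  have ev2: "eventually (\<lambda>p. bsc_L e < bsc_L p) (at_right (0::real))"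
    using bsc_lim unfolding filterlim_at_top_dense by blast
  have key: "vn_err dv e p / p = real n * (1-p)^(n-1) * c + R p / p \<and> norm (R p / p) \<le> 2^n * p"
    if p: "0 < p" "p < 1/2" and L: "bsc_L e < bsc_L p" for p
  proof -
    have Lp: "bsc_L p > 0" using bsc_pos p by auto
    have B0: "B p 0 = 0"
    proof -
      have m: "real n * bsc_L p \<ge> 1 * bsc_L p" using n1 Lp by (intro mult_right_mono) auto
      have "sign_err(bsc_L e + (real n - 2*real (0::nat))*bsc_L p) = 0"
        apply (rule se_pos) apply simp using m L Le Lp by linarith
      moreover have "sign_err(-bsc_L e + (real n - 2*real (0::nat))*bsc_L p) = 0"
        apply (rule se_pos) apply simp using m L Le Lp by linarith
      ultimately have "sign_err(bsc_L e + (real n - 2*real (0::nat))*bsc_L p) = 0"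
           "sign_err(-bsc_L e + (real n - 2*real (0::nat))*bsc_L p) = 0" by auto
      then show ?thesis by (simp add: B_def)
    qed
    have B1: "B p 1 = c"
    proof (cases "dv = 2")
      case True
      then have "n = 1" by (simp add: n_def)
      then have "sign_err(bsc_L e + (real n - 2*real (1::nat))*bsc_L p) = 1"
           "sign_err(-bsc_L e + (real n - 2*real (1::nat))*bsc_L p) = 1"
        using L Le Lp by (auto intro!: se_neg)
      then show ?thesis using True by (simp add: B_def c_def)
    next
      case False
      show ?thesis
      proof (cases "dv = 3")
        case True
        then have n2: "n = 2" by (simp add: n_def)
        show ?thesis
        proof (cases "e = 1/2")
          case True
          then show ?thesis using n2 \<open>dv = 3\<close> by (simp add: B_def c_def bsc_half sign_err_def True)
        next
          case False
          then have "bsc_L e > 0" using bsc_pos e by auto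
          then show ?thesis using n2 \<open>dv = 3\<close>
            by (simp add: B_def c_def se_pos se_neg)
        qed
      next
        case False
        then have n3: "real n - 2 \<ge> 1" using \<open>dv \<noteq> 2\<close> dv by (simp add: n_def)
        have m: "(real n - 2) * bsc_L p \<ge> 1 * bsc_L p" using n3 Lp by (intro mult_right_mono) auto
        have "sign_err(bsc_L e + (real n - 2*real (1::nat))*bsc_L p) = 0"
          apply (rule se_pos) apply simp using m L Le Lp by linarith
        moreover have "sign_err(-bsc_L e + (real n - 2*real (1::nat))*bsc_L p) = 0"
          apply (rule se_pos) apply simp using m L Le Lp by linarith
        ultimately have "sign_err(bsc_L e + (real n - 2*real (1::nat))*bsc_L p) = 0"
           "sign_err(-bsc_L e + (real n - 2*real (1::nat))*bsc_L p) = 0" by auto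
        then show ?thesis using False \<open>dv \<noteq> 2\<close> by (simp add: B_def c_def)
      qed
    qed
    have Rb: "\<bar>R p\<bar> \<le> 2^n * p^2"
    proof -
      have "\<bar>T p k\<bar> \<le> real (n choose k) * p^2" if k: "k \<in> {2..n}" for k
      proof -
        have "p^k \<le> p^2" using k p by (intro power_decreasing) auto
        have "(1-p)^(n-k) \<le> 1" using p by (intro power_le_one) auto
        have "p^k * ((1-p)^(n-k) * B p k) \<le> p^2 * (1 * 1)"
          using \<open>p^k \<le> p^2\<close> \<open>(1-p)^(n-k) \<le> 1\<close> B01[of p k] p
          by (intro mult_mono) auto
        then have "real (n choose k) * (p^k * ((1-p)^(n-k) * B p k)) \<le> real (n choose k) * p^2"
          by (intro mult_left_mono) auto
        moreover have "0 \<le> T p k" unfolding T_def using B01[of p k] p by auto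
        ultimately show ?thesis by (simp add: T_def mult.assoc)
      qed
      then have "\<bar>R p\<bar> \<le> (\<Sum>k\<in>{2..n}. real (n choose k) * p^2)"
        unfolding R_def by (intro order_trans[OF sum_abs] sum_mono) auto
      also have "\<dots> \<le> (\<Sum>k\<le>n. real (n choose k) * p^2)"
        by (intro sum_mono2) auto
      also have "\<dots> = real (\<Sum>k\<le>n. n choose k) * p^2"
        by (simp add: sum_distrib_right)
      also have "\<dots> = 2^n * p^2" by (simp add: choose_row_sum)
      finally show ?thesis .
    qed
    have "T p 0 = 0" by (simp add: T_def B0)
    moreover have "T p 1 = real n * p * (1-p)^(n-1) * c" using B1 by (simp add: T_def)
    ultimately have "vn_err dv e p / p = (real n * p * (1-p)^(n-1) * c + R p) / p"
      by (simp add: vn2)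
    also have "\<dots> = real n * (1-p)^(n-1) * c + R p / p" using p by (simp add: field_simps)
    finally have A: "vn_err dv e p / p = real n * (1-p)^(n-1) * c + R p / p" .
    have "norm (R p / p) = \<bar>R p\<bar> / p" using p by simp
    also have "\<dots> \<le> 2^n * p^2 / p" using Rb p by (intro divide_right_mono) auto
    also have "\<dots> = 2^n * p" using p by (simp add: power2_eq_square)
    finally show ?thesis using A by simp
  qed
  have evk: "eventually (\<lambda>p. vn_err dv e p / p = real n * (1-p)^(n-1) * c + R p / p
       \<and> norm (R p / p) \<le> 2^n * p) (at_right (0::real))"
    using ev1 ev2 by eventually_elim (use key in auto)
  have l1: "((\<lambda>p. real n * (1-p)^(n-1) * c) \<longlongrightarrow> real n * (1-0)^(n-1) * c) (at_right (0::real))"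
    by (intro tendsto_intros)
  have l0: "((\<lambda>p::real. 2^n * p) \<longlongrightarrow> 2^n * 0) (at_right (0::real))"
    by (intro tendsto_intros)
  have l2: "((\<lambda>p. R p / p) \<longlongrightarrow> 0) (at_right (0::real))"
    by (rule Lim_null_comparison[OF _ l0[simplified]]) (use evk in \<open>auto elim: eventually_mono\<close>)
  have l3: "((\<lambda>p. real n * (1-p)^(n-1) * c + R p / p) \<longlongrightarrow> real n * c + 0) (at_right (0::real))"
    using tendsto_add[OF l1 l2] by simp
  have "((\<lambda>p. vn_err dv e p / p) \<longlongrightarrow> real n * c) (at_right (0::real))"
    by (rule Lim_transform_eventually[OF l3[simplified]]) (use evk in \<open>auto elim: eventually_mono\<close>)
  then show ?thesis by (simp add: n_def c_def)
qed


lemma cn_zero: "cn_err dc 0 = 0" by (simp add: cn_err_def)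

lemma cn_deriv: assumes "dc \<ge> 2" shows "(cn_err dc has_real_derivative real (dc-1)) (at 0)"
proof -
  have "((\<lambda>x. (1 - (1 - 2 * x) ^ (dc - 1)) / 2) has_real_derivative real (dc-1)) (at (0::real))"
    by (auto intro!: derivative_eq_intros)
  then show ?thesis by (simp add: cn_err_def[abs_def])
qed

lemma cn_ratio: assumes "dc \<ge> 2" shows "((\<lambda>x. cn_err dc x / x) \<longlongrightarrow> real (dc-1)) (at_right 0)"
proof -
  have "(cn_err dc has_real_derivative real (dc-1)) (at 0 within {0<..})"
    using cn_deriv[OF assms] by (rule has_field_derivative_at_within)
  then have "((\<lambda>y. (cn_err dc y - cn_err dc 0) / (y - 0)) \<longlongrightarrow> real (dc-1)) (at 0 within {0<..})"
    by (simp add: has_field_derivative_iff)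
  then show ?thesis by (simp add: cn_zero)
qed

lemma cn_tendsto: assumes "dc \<ge> 2" shows "(cn_err dc \<longlongrightarrow> 0) (at_right 0)"
proof -
  have "isCont (cn_err dc) 0" using cn_deriv[OF assms] by (rule DERIV_isCont)
  then have "(cn_err dc \<longlongrightarrow> cn_err dc 0) (at 0)" by (simp add: isCont_def)
  then have "(cn_err dc \<longlongrightarrow> 0) (at 0)" by (simp add: cn_zero)
  then show ?thesis by (rule tendsto_within_subset) simp
qed

lemma cn_pos: assumes "dc \<ge> 2" "0 < x" "x < 1/2" shows "0 < cn_err dc x"
proof -
  have "(1 - 2*x) ^ (dc-1) < 1" using assms by (subst power_less_one_iff) auto
  then show ?thesis by (simp add: cn_err_def)
qed

lemma cn_filterlim: assumes "dc \<ge> 2" shows "filterlim (cn_err dc) (at_right 0) (at_right 0)"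
  unfolding filterlim_at
proof
  have "eventually (\<lambda>x. x \<in> {0<..<1/2}) (at_right (0::real))"
    by (rule eventually_at_right_real) simp
  then show "\<forall>\<^sub>F x in at_right 0. cn_err dc x \<in> {0<..} \<and> cn_err dc x \<noteq> 0"
  proof eventually_elim
    case (elim x)
    then have "0 < cn_err dc x" using cn_pos[OF assms] by auto
    then show ?case by auto
  qed
  show "(cn_err dc \<longlongrightarrow> 0) (at_right 0)" by (rule cn_tendsto[OF assms])
qed

lemma comp_lim:
  assumes dv: "dv \<ge> 2" and dc: "dc \<ge> 2" and e: "0 < e" "e \<le> 1/2"
  shows "((\<lambda>x. vn_err dv e (cn_err dc x) / x) \<longlongrightarrow>
     real (dv-1) * (if dv = 2 then 1 else if dv = 3 then e else 0) * real (dc - 1)) (at_right 0)"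
proof -
  have l1: "((\<lambda>x. vn_err dv e (cn_err dc x) / cn_err dc x) \<longlongrightarrow>
     real (dv-1) * (if dv = 2 then 1 else if dv = 3 then e else 0)) (at_right 0)"
    using filterlim_compose[OF vn_lim[OF dv e] cn_filterlim[OF dc]] by (simp add: o_def)
  have l: "((\<lambda>x. vn_err dv e (cn_err dc x) / cn_err dc x * (cn_err dc x / x)) \<longlongrightarrow>
     real (dv-1) * (if dv = 2 then 1 else if dv = 3 then e else 0) * real (dc - 1)) (at_right 0)"
    by (rule tendsto_mult[OF l1 cn_ratio[OF dc]])
  have "eventually (\<lambda>x. x \<in> {0<..<1/2}) (at_right (0::real))"
    by (rule eventually_at_right_real) simp
  then have "eventually (\<lambda>x. vn_err dv e (cn_err dc x) / cn_err dc x * (cn_err dc x / x)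
      = vn_err dv e (cn_err dc x) / x) (at_right (0::real))"
  proof eventually_elim
    case (elim x)
    then have "0 < cn_err dc x" using cn_pos[OF dc] by auto
    then show ?case using elim by auto
  qed
  then show ?thesis by (rule Lim_transform_eventually[OF l])
qed

lemma comp_bound:
  assumes dc: "dc \<ge> 2"
  shows "eventually (\<lambda>x. \<forall>dv e. dv \<ge> 2 \<longrightarrow> 0 < e \<longrightarrow> e \<le> 1/2 \<longrightarrow>
     norm (vn_err dv e (cn_err dc x) / x) \<le> 2^(dv-1) * (real (dc-1) + 1)) (at_right 0)"
proof -
  have e1: "eventually (\<lambda>x. x \<in> {0<..<1/2}) (at_right (0::real))"
    by (rule eventually_at_right_real) simp
  have e2: "eventually (\<lambda>x. cn_err dc x < 1/2) (at_right (0::real))"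
    using cn_tendsto[OF dc] by (rule order_tendstoD) simp
  have e3: "eventually (\<lambda>x. cn_err dc x / x < real (dc-1) + 1) (at_right (0::real))"
    using cn_ratio[OF dc] by (rule order_tendstoD) simp
  show ?thesis using e1 e2 e3
  proof eventually_elim
    case (elim x)
    show ?case
    proof (intro allI impI)
      fix dv :: nat and e :: real
      assume dv: "dv \<ge> 2" and e: "0 < e" "e \<le> 1/2"
      have x: "0 < x" using elim by simp
      have p: "0 < cn_err dc x" using cn_pos[OF dc] elim by auto
      note vb = vn_bound[OF dv p elim(2) e]
      have "norm (vn_err dv e (cn_err dc x) / x) = vn_err dv e (cn_err dc x) / x"
        using vb x by simp
      also have "\<dots> \<le> 2^(dv-1) * cn_err dc x / x"
        using vb x by (intro divide_right_mono) auto
      also have "\<dots> = 2^(dv-1) * (cn_err dc x / x)" by simp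
      also have "\<dots> \<le> 2^(dv-1) * (real (dc-1) + 1)"
        using elim(3) by (intro mult_left_mono) auto
      finally show "norm (vn_err dv e (cn_err dc x) / x) \<le> 2^(dv-1) * (real (dc-1) + 1)" .
    qed
  qed
qed


lemma dc_at_right0:
  fixes s :: "real \<Rightarrow> 'a \<Rightarrow> real" and w :: "'a \<Rightarrow> real"
  assumes "f \<in> borel_measurable M" "\<And>t. s t \<in> borel_measurable M" "integrable M w"
    and lim: "AE x in M. ((\<lambda>t. s t x) \<longlongrightarrow> f x) (at_right 0)"
    and bound: "\<forall>\<^sub>F t in at_right 0. AE x in M. norm (s t x) \<le> w x"
  shows "((\<lambda>t. integral\<^sup>L M (s t)) \<longlongrightarrow> integral\<^sup>L M f) (at_right 0)"
proof -
  have lim': "AE x in M. ((\<lambda>t. s (inverse t) x) \<longlongrightarrow> f x) at_top"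
    using lim by eventually_elim (simp add: filterlim_at_right_to_top)
  have bound': "\<forall>\<^sub>F t in at_top. AE x in M. norm (s (inverse t) x) \<le> w x"
    using bound by (simp add: eventually_at_right_to_top)
  have "((\<lambda>t. integral\<^sup>L M (s (inverse t))) \<longlongrightarrow> integral\<^sup>L M f) at_top"
    by (rule integral_dominated_convergence_at_top[OF assms(1) assms(2) assms(3) lim' bound'])
  then show ?thesis by (simp add: filterlim_at_right_to_top)
qed

lemma sign_err_meas[measurable]: "sign_err \<in> borel_measurable borel"
  unfolding sign_err_def[abs_def] by measurable

lemma bsc_L_meas[measurable]: "bsc_L \<in> borel_measurable borel"
  unfolding bsc_L_def[abs_def] by measurable

lemma vn_meas: "(\<lambda>e. vn_err dv e p / x) \<in> borel_measurable borel"
  unfolding vn_err_def by measurable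


theorem theorem2:
  fixes M :: "real measure" and lam :: "nat \<Rightarrow> real" and dmax dc :: nat
  assumes "prob_space M"
    and "sets M = sets borel"
    and "AE e in M. 0 < e \<and> e \<le> 1/2"
    and "dc \<ge> 2"
    and "\<And>i. lam i \<ge> 0"
    and "\<And>i. i \<notin> {2..dmax} \<Longrightarrow> lam i = 0"
    and "(\<Sum>i\<in>{2..dmax}. lam i) = 1"
  shows "bmp_stable M lam dmax dc \<longleftrightarrow>
           (lam 2 + 2 * (\<integral>e. e \<partial>M) * lam 3) * (real dc - 1) < 1"
proof -
  interpret P: prob_space M by fact
  have dc: "dc \<ge> 2" by fact
  define m where "m = real (dc - 1)"
  define E where "E = (\<integral>e. e \<partial>M)"
  define S where "S = {2..dmax}"
  define a where "a i e = real (i-1) * (if i = 2 then 1 else if i = 3 then e else 0) * m"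
    for i :: nat and e :: real
  define c where "c i = (if i = 2 then m else if i = 3 then 2 * m * E else 0)" for i :: nat
  have meas: "g \<in> borel_measurable M" if "g \<in> borel_measurable borel" for g :: "real \<Rightarrow> real"
    using that measurable_cong_sets[OF assms(2) refl, of borel] by metis
  have Li: "((\<lambda>x. \<integral>e. vn_err i e (cn_err dc x) / x \<partial>M) \<longlongrightarrow> (\<integral>e. a i e \<partial>M)) (at_right 0)"
    if i: "i \<in> S" for i
  proof (rule dc_at_right0[where w = "\<lambda>_. 2^(i-1) * (m + 1)"])
    have i2: "i \<ge> 2" using i by (simp add: S_def)
    show "(\<lambda>e. a i e) \<in> borel_measurable M" by (rule meas) (simp add: a_def)
    show "(\<lambda>e. vn_err i e (cn_err dc x) / x) \<in> borel_measurable M" for x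
      by (rule meas) (rule vn_meas)
    show "integrable M (\<lambda>_. 2^(i-1) * (m + 1))" by simp
    show "AE e in M. ((\<lambda>x. vn_err i e (cn_err dc x) / x) \<longlongrightarrow> a i e) (at_right 0)"
      using assms(3) by eventually_elim (use comp_lim[OF i2 dc] in \<open>simp add: a_def m_def\<close>)
    show "\<forall>\<^sub>F x in at_right 0. AE e in M. norm (vn_err i e (cn_err dc x) / x) \<le> 2^(i-1) * (m + 1)"
      using comp_bound[OF dc]
    proof eventually_elim
      case (elim x)
      show ?case using assms(3) by eventually_elim (use elim i2 in \<open>simp add: m_def\<close>)
    qed
  qed
  have ci: "(\<integral>e. a i e \<partial>M) = c i" for i
  proof -
    consider "i = 2" | "i = 3" | "i \<noteq> 2" "i \<noteq> 3" by blast
    then show ?thesis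
    proof cases
      case 1 then show ?thesis by (simp add: a_def c_def P.prob_space)
    next
      case 2 then show ?thesis by (simp add: a_def c_def E_def)
    next
      case 3 then show ?thesis by (simp add: a_def c_def)
    qed
  qed
  define D0 where "D0 = (\<Sum>i\<in>S. lam i * c i)"
  have lim: "((\<lambda>x. \<Sum>i\<in>S. lam i * (\<integral>e. vn_err i e (cn_err dc x) / x \<partial>M)) \<longlongrightarrow> D0) (at_right 0)"
    unfolding D0_def by (intro tendsto_sum tendsto_mult_left) (use Li ci in auto)
  have evq: "eventually (\<lambda>x. (\<Sum>i\<in>S. lam i * (\<integral>e. vn_err i e (cn_err dc x) / x \<partial>M))
      = (bmp_update M lam dmax dc x - bmp_update M lam dmax dc 0) / (x - 0)) (at_right (0::real))"
  proof -
    have "eventually (\<lambda>x. x \<in> {0<..<1}) (at_right (0::real))"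
      by (rule eventually_at_right_real) simp
    then show ?thesis
    proof eventually_elim
      case (elim x)
      then have "x \<noteq> 0" by simp
      then show ?case
        by (simp add: bmp_update_def S_def sum_divide_distrib)
    qed
  qed
  have der: "(bmp_update M lam dmax dc has_real_derivative D0) (at_right 0)"
    unfolding has_field_derivative_iff using Lim_transform_eventually[OF lim evq] .
  have uniq: "D = D0" if "(bmp_update M lam dmax dc has_real_derivative D) (at_right 0)" for D
  proof -
    have "((\<lambda>y. (bmp_update M lam dmax dc y - bmp_update M lam dmax dc 0) / (y - 0)) \<longlongrightarrow> D) (at_right 0)"
      using that unfolding has_field_derivative_iff .
    moreover have "((\<lambda>y. (bmp_update M lam dmax dc y - bmp_update M lam dmax dc 0) / (y - 0)) \<longlongrightarrow> D0) (at_right 0)"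
      using der unfolding has_field_derivative_iff .
    ultimately show ?thesis by (rule tendsto_unique[rotated]) simp
  qed
  have dmax2: "dmax \<ge> 2"
  proof (rule ccontr)
    assume "\<not> dmax \<ge> 2"
    then have "{2..dmax} = {}" by auto
    then show False using assms(7) by simp
  qed
  have l3: "lam 3 = 0" if "3 \<notin> S" using assms(6) that by (simp add: S_def)
  have "D0 = (\<Sum>i\<in>S. (if i = 2 then lam 2 * m else 0) + (if i = 3 then lam 3 * (2 * m * E) else 0))"
    unfolding D0_def by (intro sum.cong) (auto simp: c_def)
  also have "\<dots> = lam 2 * m + (if 3 \<in> S then lam 3 * (2 * m * E) else 0)"
    using dmax2 by (simp add: sum.distrib S_def)
  also have "\<dots> = (lam 2 + 2 * E * lam 3) * (real dc - 1)"
  proof -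
    have m': "m = real dc - 1" using dc by (simp add: m_def of_nat_diff)
    have "(if 3 \<in> S then lam 3 * (2 * m * E) else 0) = lam 3 * (2 * m * E)"
      using l3 by simp
    then show ?thesis unfolding m' by (simp add: algebra_simps)
  qed
  finally have D0eq: "D0 = (lam 2 + 2 * E * lam 3) * (real dc - 1)" .
  show ?thesis
  proof
    assume "bmp_stable M lam dmax dc"
    then obtain D where "(bmp_update M lam dmax dc has_real_derivative D) (at_right 0)" "D < 1"
      unfolding bmp_stable_def by blast
    then have "D0 < 1" using uniq by simp
    then show "(lam 2 + 2 * (\<integral>e. e \<partial>M) * lam 3) * (real dc - 1) < 1"
      using D0eq by (simp add: E_def)
  next
    assume "(lam 2 + 2 * (\<integral>e. e \<partial>M) * lam 3) * (real dc - 1) < 1"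
    then have "D0 < 1" using D0eq by (simp add: E_def)
    then show "bmp_stable M lam dmax dc" unfolding bmp_stable_def using der by blast
  qed
qed

end
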